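(* Let $A$ be a commutative unital C*-algebra, let $\theta : A \to M_n(\mathbb{C})$ be a continuous unital homomorphism, and let $\alpha : A \to A$ be a unital antilinear contraction. Define $$\theta_\alpha(f) := \tfrac12\bigl(\theta(f)+\theta(\alpha(f))^*\bigr)\quad (f\in A).$$ If $\|\theta_\alpha\|\le 1$, then $\theta$ is a $*$-homomorphism, and in particular $\|\theta\|=1$.
   Context: $M_n(\mathbb{C})$ carries the operator norm. A map $\alpha$ is antilinear if $\alpha(\lambda f+g)=\overline\lambda\alpha(f)+\alpha(g)$. It is a contraction if $\|\alpha(f)\|\le\|f\|$, and it is unital if $\alpha(1)=1$. *)

theory Defs
  imports "HOL-Analysis.Analysis"
begin

text \<open>A commutative unital C*-algebra: a commutative unital real Banach algebra
(type class) together with a complex scalar multiplication sm extending the real one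
and an involution st satisfying the C*-identity.\<close>

definition comm_unital_cstar ::
  "(complex \<Rightarrow> 'a::{real_normed_algebra_1,comm_ring_1,banach} \<Rightarrow> 'a) \<Rightarrow> ('a \<Rightarrow> 'a) \<Rightarrow> bool" where
  "comm_unital_cstar sm st \<longleftrightarrow>
     (\<forall>x. sm 1 x = x) \<and>
     (\<forall>a b x. sm (a * b) x = sm a (sm b x)) \<and>
     (\<forall>a x y. sm a (x + y) = sm a x + sm a y) \<and>
     (\<forall>a b x. sm (a + b) x = sm a x + sm b x) \<and>
     (\<forall>r x. sm (complex_of_real r) x = r *\<^sub>R x) \<and>
     (\<forall>a x y. sm a (x * y) = sm a x * y) \<and>
     (\<forall>a x. norm (sm a x) = cmod a * norm x) \<and>
     (\<forall>x y. st (x + y) = st x + st y) \<and>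
     (\<forall>a x. st (sm a x) = sm (cnj a) (st x)) \<and>
     (\<forall>x. st (st x) = x) \<and>
     (\<forall>x y. st (x * y) = st y * st x) \<and>
     (\<forall>x. norm (st x * x) = (norm x)\<^sup>2)"

definition mscale :: "complex \<Rightarrow> complex^'n^'m \<Rightarrow> complex^'n^'m" where
  "mscale c M = (\<chi> i j. c * M$i$j)"

definition adj :: "complex^'n^'m \<Rightarrow> complex^'m^'n" where
  "adj M = (\<chi> i j. cnj (M$j$i))"

definition mnorm :: "complex^'n^'m \<Rightarrow> real" where
  "mnorm M = onorm (\<lambda>v. M *v v)"

end

theory Submission
  imports Defs "HOL-Computational_Algebra.Fundamental_Theorem_Algebra"
begin


definition cinner :: "complex^'n \<Rightarrow> complex^'n \<Rightarrow> complex" where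
  "cinner x y = (\<Sum>i\<in>UNIV. x$i * cnj (y$i))"

lemma cinner_add_left: "cinner (x + y) z = cinner x z + cinner y z"
  by (simp add: cinner_def sum.distrib algebra_simps)
lemma cinner_add_right: "cinner x (y + z) = cinner x y + cinner x z"
  by (simp add: cinner_def sum.distrib algebra_simps)
lemma cinner_diff_left: "cinner (x - y) z = cinner x z - cinner y z"
  by (simp add: cinner_def sum_subtractf algebra_simps)
lemma cinner_diff_right: "cinner x (y - z) = cinner x y - cinner x z"
  by (simp add: cinner_def sum_subtractf algebra_simps)
lemma cinner_minus_left: "cinner (- x) z = - cinner x z"
  by (simp add: cinner_def sum_negf)
lemma cinner_minus_right: "cinner x (- z) = - cinner x z"
  by (simp add: cinner_def sum_negf)
lemma cinner_scale_left: "cinner (c *s x) y = c * cinner x y"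
  by (simp add: cinner_def sum_distrib_left algebra_simps)
lemma cinner_scale_right: "cinner x (c *s y) = cnj c * cinner x y"
  by (simp add: cinner_def sum_distrib_left algebra_simps)
lemma cinner_zero_left[simp]: "cinner 0 y = 0"
  by (simp add: cinner_def)
lemma cinner_zero_right[simp]: "cinner x 0 = 0"
  by (simp add: cinner_def)
lemma cinner_sum_left: "cinner (\<Sum>i\<in>I. f i) y = (\<Sum>i\<in>I. cinner (f i) y)"
  by (induction I rule: infinite_finite_induct) (auto simp: cinner_add_left)
lemma cinner_sum_right: "cinner x (\<Sum>i\<in>I. f i) = (\<Sum>i\<in>I. cinner x (f i))"
  by (induction I rule: infinite_finite_induct) (auto simp: cinner_add_right)
lemma cinner_cnj: "cnj (cinner x y) = cinner y x"
  by (simp add: cinner_def mult.commute)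

lemma norm_sq_vec: "(norm (x::complex^'n))^2 = (\<Sum>i\<in>UNIV. (cmod (x$i))^2)"
  by (simp add: norm_vec_def L2_set_def sum_nonneg)

lemma cinner_self: "cinner x x = complex_of_real ((norm x)^2)"
  by (simp add: cinner_def norm_sq_vec complex_mult_cnj cmod_power2)

lemma cinner_self_Re: "Re (cinner x x) = (norm x)^2"
  by (simp add: cinner_self)

lemma norm_smult_vec: "norm (c *s (x::complex^'n)) = cmod c * norm x"
proof -
  have "(norm (c *s x))^2 = (cmod c * norm x)^2"
    by (simp add: norm_sq_vec power_mult_distrib norm_mult sum_distrib_left)
  then show ?thesis by (simp add: power2_eq_iff_nonneg)
qed

lemma Re_cinner: "Re (cinner x y) = inner x y"
  by (simp add: cinner_def inner_vec_def inner_complex_def Re_sum)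

lemma cinner_CS: "cmod (cinner x y) \<le> norm x * norm y"
proof (cases "cinner x y = 0")
  case True then show ?thesis by simp
next
  case False
  define c where "c = cinner x y"
  have "cinner x (c *s y) = complex_of_real ((cmod c)^2)"
    by (simp add: cinner_scale_right c_def complex_norm_square mult.commute del: of_real_power)
  then have "(cmod c)^2 = inner x (c *s y)"
    by (metis Re_cinner Re_complex_of_real)
  also have "\<dots> \<le> norm x * norm (c *s y)" by (rule norm_cauchy_schwarz)
  also have "\<dots> = cmod c * (norm x * norm y)" by (simp add: norm_smult_vec)
  finally have "cmod c * cmod c \<le> cmod c * (norm x * norm y)" by (simp add: power2_eq_square)
  moreover have "cmod c > 0" using False c_def by simp
  ultimately show ?thesis unfolding c_def by simp
qed

lemma cinner_adj: "cinner (M *v x) y = cinner x (adj M *v y)"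
proof -
  have "cinner (M *v x) y = (\<Sum>i\<in>UNIV. \<Sum>j\<in>UNIV. M$i$j * x$j * cnj (y$i))"
    by (simp add: cinner_def matrix_vector_mult_def sum_distrib_right)
  also have "\<dots> = (\<Sum>j\<in>UNIV. \<Sum>i\<in>UNIV. M$i$j * x$j * cnj (y$i))"
    by (rule sum.swap)
  also have "\<dots> = cinner x (adj M *v y)"
    by (simp add: cinner_def matrix_vector_mult_def adj_def sum_distrib_left mult_ac)
  finally show ?thesis .
qed

lemma mscale_mv: "mscale c M *v v = c *s (M *v v)"
  by (simp add: mscale_def matrix_vector_mult_def vec_eq_iff sum_distrib_left mult.assoc)

lemma adj_add: "adj (M + N) = adj M + adj N"
  by (simp add: adj_def vec_eq_iff)
lemma adj_diff: "adj (M - N) = adj M - adj N"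
  by (simp add: adj_def vec_eq_iff)
lemma adj_mscale: "adj (mscale c M) = mscale (cnj c) (adj M)"
  by (simp add: adj_def mscale_def vec_eq_iff)
lemma adj_adj[simp]: "adj (adj M) = M"
  by (simp add: adj_def vec_eq_iff)
lemma adj_mat1: "adj (mat 1 :: complex^'n^'n) = mat 1"
  by (simp add: adj_def mat_def vec_eq_iff)
lemma adj_mult: "adj (M ** N) = adj N ** adj M"
  by (simp add: adj_def matrix_matrix_mult_def vec_eq_iff mult.commute)

lemma mv_mnorm: "norm (M *v v) \<le> mnorm M * norm (v::complex^'n)"
  unfolding mnorm_def by (rule onorm) simp

lemma cinner_mnorm: "cmod (cinner (M *v x) x) \<le> mnorm M * (norm x)^2"
proof -
  have "cmod (cinner (M *v x) x) \<le> norm (M *v x) * norm x" by (rule cinner_CS)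
  also have "\<dots> \<le> mnorm M * norm x * norm x"
    by (simp add: mult_right_mono mv_mnorm)
  finally show ?thesis by (simp add: power2_eq_square mult.assoc)
qed

lemma mv_frob: "norm (M *v v) \<le> norm M * norm (v::complex^'n)"
proof -
  have row: "cmod ((M *v v)$i) \<le> norm (M$i) * norm v" for i
  proof -
    have "cmod ((M *v v)$i) \<le> (\<Sum>j\<in>UNIV. cmod (M$i$j) * cmod (v$j))"
      by (simp add: matrix_vector_mult_def) (metis (no_types, lifting) norm_mult norm_sum sum.cong)
    also have "\<dots> \<le> L2_set (\<lambda>j. cmod (M$i$j)) UNIV * L2_set (\<lambda>j. cmod (v$j)) UNIV"
      using L2_set_mult_ineq[of "\<lambda>j. cmod (M$i$j)" "\<lambda>j. cmod (v$j)" UNIV] by simp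
    finally show ?thesis by (simp add: norm_vec_def)
  qed
  have "(norm (M *v v))^2 \<le> (norm M * norm v)^2"
  proof -
    have "(norm (M *v v))^2 = (\<Sum>i\<in>UNIV. (cmod ((M *v v)$i))^2)" by (rule norm_sq_vec)
    also have "\<dots> \<le> (\<Sum>i\<in>UNIV. (norm (M$i) * norm v)^2)"
      by (intro sum_mono power_mono row) simp
    also have "\<dots> = (norm M * norm v)^2"
      by (simp add: power_mult_distrib sum_distrib_right norm_vec_def L2_set_def sum_nonneg)
    finally show ?thesis .
  qed
  then show ?thesis by (simp add: power2_le_iff_abs_le)
qed

lemma vec_eq_cinner: "(\<And>y. cinner x y = cinner z y) \<Longrightarrow> x = (z::complex^'n)"
proof -
  assume h: "\<And>y. cinner x y = cinner z y"
  have "cinner (x - z) (x - z) = 0" using h by (simp add: cinner_diff_left)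
  then have "norm (x - z) = 0" by (simp add: cinner_self)
  then show ?thesis by simp
qed




locale cs_setting =
  fixes sm :: "complex \<Rightarrow> 'a::{real_normed_algebra_1,comm_ring_1,banach} \<Rightarrow> 'a"
    and st :: "'a \<Rightarrow> 'a"
    and th :: "'a \<Rightarrow> complex^'n::finite^'n"
    and al :: "'a \<Rightarrow> 'a"
  assumes A: "comm_unital_cstar sm st"
    and th_add: "\<And>x y. th (x + y) = th x + th y"
    and th_sm: "\<And>c x. th (sm c x) = mscale c (th x)"
    and th_mult: "\<And>x y. th (x * y) = th x ** th y"
    and th_one: "th 1 = mat 1"
    and th_cont: "continuous_on UNIV th"
    and al_add: "\<And>x y. al (x + y) = al x + al y"
    and al_sm: "\<And>c x. al (sm c x) = sm (cnj c) (al x)"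
    and al_contr: "\<And>f. norm (al f) \<le> norm f"
    and al_one: "al 1 = 1"
    and th_al_norm: "\<And>f. mnorm (mscale (1/2) (th f + adj (th (al f)))) \<le> norm f"
begin

lemmas AF = A[unfolded comm_unital_cstar_def]

lemma sm_one[simp]: "sm 1 x = x" using AF[THEN conjunct1] by blast
lemma sm_assoc: "sm (a * b) x = sm a (sm b x)" using AF[THEN conjunct2, THEN conjunct1] by blast
lemma sm_addr: "sm a (x + y) = sm a x + sm a y" using AF[THEN conjunct2, THEN conjunct2, THEN conjunct1] by blast
lemma sm_addl: "sm (a + b) x = sm a x + sm b x" using AF[THEN conjunct2, THEN conjunct2, THEN conjunct2, THEN conjunct1] by blast
lemma sm_real: "sm (complex_of_real r) x = r *\<^sub>R x" using AF[THEN conjunct2, THEN conjunct2, THEN conjunct2, THEN conjunct2, THEN conjunct1] by blast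
lemma sm_mult: "sm a (x * y) = sm a x * y" using AF[THEN conjunct2, THEN conjunct2, THEN conjunct2, THEN conjunct2, THEN conjunct2, THEN conjunct1] by blast
lemma sm_norm: "norm (sm a x) = cmod a * norm x" using AF[THEN conjunct2, THEN conjunct2, THEN conjunct2, THEN conjunct2, THEN conjunct2, THEN conjunct2, THEN conjunct1] by blast
lemma st_add: "st (x + y) = st x + st y" using AF[THEN conjunct2, THEN conjunct2, THEN conjunct2, THEN conjunct2, THEN conjunct2, THEN conjunct2, THEN conjunct2, THEN conjunct1] by blast
lemma st_sm: "st (sm a x) = sm (cnj a) (st x)" using AF[THEN conjunct2, THEN conjunct2, THEN conjunct2, THEN conjunct2, THEN conjunct2, THEN conjunct2, THEN conjunct2, THEN conjunct2, THEN conjunct1] by blast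
lemma st_st[simp]: "st (st x) = x" using AF[THEN conjunct2, THEN conjunct2, THEN conjunct2, THEN conjunct2, THEN conjunct2, THEN conjunct2, THEN conjunct2, THEN conjunct2, THEN conjunct2, THEN conjunct1] by blast
lemma st_mult: "st (x * y) = st y * st x" using AF[THEN conjunct2, THEN conjunct2, THEN conjunct2, THEN conjunct2, THEN conjunct2, THEN conjunct2, THEN conjunct2, THEN conjunct2, THEN conjunct2, THEN conjunct2, THEN conjunct1] by blast
lemma cstar: "norm (st x * x) = (norm x)^2" using AF[THEN conjunct2, THEN conjunct2, THEN conjunct2, THEN conjunct2, THEN conjunct2, THEN conjunct2, THEN conjunct2, THEN conjunct2, THEN conjunct2, THEN conjunct2, THEN conjunct2] by blast

lemma sm_zero_left[simp]: "sm 0 x = 0"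
  using sm_real[of 0 x] by simp
lemma sm_zero_right[simp]: "sm a 0 = 0"
  using sm_addr[of a 0 0] by simp
lemma sm_neg_right: "sm a (- x) = - sm a x"
  using sm_addr[of a x "-x"] by (simp add: eq_neg_iff_add_eq_0 add.commute)
lemma sm_diff_right: "sm a (x - y) = sm a x - sm a y"
  using sm_addr[of a x "-y"] by (simp add: sm_neg_right)
lemma sm_neg_left: "sm (- a) x = - sm a x"
  using sm_addl[of a "-a" x] by (simp add: eq_neg_iff_add_eq_0 add.commute)
lemma sm_diff_left: "sm (a - b) x = sm a x - sm b x"
  using sm_addl[of a "-b" x] by (simp add: sm_neg_left)
lemma sm_is_mult: "sm a x = sm a 1 * x"
  using sm_mult[of a 1 x] by simp
lemma sm_mult_right: "sm a (x * y) = x * sm a y"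
  by (metis sm_mult mult.commute)
lemma sm1_mult: "sm a 1 * sm b 1 = sm (a * b) 1"
  by (metis sm_assoc sm_is_mult)
lemma sm_sum_left: "sm (\<Sum>i\<in>I. f i) x = (\<Sum>i\<in>I. sm (f i) x)"
  by (induction I rule: infinite_finite_induct) (auto simp: sm_addl)
lemma sm_sum_right: "sm a (\<Sum>i\<in>I. f i) = (\<Sum>i\<in>I. sm a (f i))"
  by (induction I rule: infinite_finite_induct) (auto simp: sm_addr)
lemma sm1_prod: "(\<Prod>i\<in>I. sm (f i) 1) = sm (\<Prod>i\<in>I. f i) 1"
  by (induction I rule: infinite_finite_induct) (auto simp: sm1_mult)
lemma sm_scaleR: "sm a (r *\<^sub>R x) = r *\<^sub>R sm a x"
  by (metis sm_assoc sm_real mult.commute)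

lemma st_zero[simp]: "st 0 = 0"
  using st_add[of 0 0] by simp
lemma st_neg: "st (- x) = - st x"
  using st_add[of x "-x"] by (simp add: eq_neg_iff_add_eq_0 add.commute)
lemma st_diff: "st (x - y) = st x - st y"
  using st_add[of x "-y"] by (simp add: st_neg)
lemma st_one[simp]: "st 1 = 1"
proof -
  have "st (st 1 * 1) = st 1 * st (st 1)" by (rule st_mult)
  then show ?thesis by simp
qed
lemma st_scaleR: "st (r *\<^sub>R x) = r *\<^sub>R st x"
  by (metis sm_real st_sm complex_cnj_complex_of_real)
lemma st_sm1: "st (sm a 1) = sm (cnj a) 1"
  by (simp add: st_sm)
lemma st_power: "st (x ^ k) = (st x) ^ k"
  by (induction k) (auto simp: st_mult mult.commute)

lemma norm_st[simp]: "norm (st x) = norm x"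
proof -
  have le: "norm y \<le> norm (st y)" for y
  proof (cases "y = 0")
    case False
    have "(norm y)^2 = norm (st y * y)" by (rule cstar[symmetric])
    also have "\<dots> \<le> norm (st y) * norm y" by (rule norm_mult_ineq)
    finally have "norm y * norm y \<le> norm (st y) * norm y" by (simp add: power2_eq_square)
    then show ?thesis using False by simp
  qed simp
  show ?thesis using le[of x] le[of "st x"] by simp
qed

lemma st_bl: "bounded_linear st"
  by (rule bounded_linear_intro[where K=1]) (auto simp: st_add st_scaleR)

lemma sm1_norm: "norm (sm a 1) = cmod a"
  by (simp add: sm_norm)

lemma sm1_bl: "bounded_linear (\<lambda>c. sm c (1::'a))"
proof (rule bounded_linear_intro[where K=1])
  fix r :: real and c :: complex
  have "sm (r *\<^sub>R c) 1 = sm (complex_of_real r) (sm c 1)"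
    by (metis scaleR_conv_of_real sm_assoc)
  then show "sm (r *\<^sub>R c) 1 = r *\<^sub>R sm c (1::'a)" by (simp add: sm_real)
qed (auto simp: sm_addl sm1_norm)

lemma th_zero[simp]: "th 0 = 0"
  using th_add[of 0 0] by simp
lemma th_neg: "th (- x) = - th x"
  using th_add[of x "-x"] by (simp add: eq_neg_iff_add_eq_0 add.commute)
lemma th_diff: "th (x - y) = th x - th y"
  using th_add[of x "-y"] by (simp add: th_neg)
lemma mscale_real: "mscale (complex_of_real r) M = r *\<^sub>R M"
proof -
  have "\<And>i j. (r *\<^sub>R M)$i$j = complex_of_real r * M$i$j"
    by (simp only: vector_scaleR_component) (simp add: scaleR_conv_of_real)
  then show ?thesis by (simp add: mscale_def vec_eq_iff)
qed
lemma th_scaleR: "th (r *\<^sub>R x) = r *\<^sub>R th x"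
  by (metis sm_real th_sm mscale_real)
lemma th_sum: "th (\<Sum>i\<in>I. f i) = (\<Sum>i\<in>I. th (f i))"
  by (induction I rule: infinite_finite_induct) (auto simp: th_add)
lemma th_linear: "linear th"
  by (rule linearI) (auto simp: th_add th_scaleR)

lemma th_mv_mult: "th (x * y) *v v = th x *v (th y *v v)"
  by (simp add: th_mult matrix_vector_mul_assoc)
lemma th_mv_sm: "th (sm c x) *v v = c *s (th x *v v)"
  by (simp add: th_sm mscale_mv)
lemma th_mv_sm1: "th (sm c 1) *v v = c *s v"
  by (simp add: th_mv_sm th_one)
lemma th_mv_one: "th 1 *v v = v"
  by (simp add: th_one)
lemma th_mv_add: "th (x + y) *v v = th x *v v + th y *v v"
  by (simp add: th_add matrix_vector_mult_add_rdistrib)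
lemma th_mv_diff: "th (x - y) *v v = th x *v v - th y *v v"
  by (simp add: th_diff matrix_vector_mult_diff_rdistrib)
lemma th_mv_sum: "th (\<Sum>i\<in>I. f i) *v v = (\<Sum>i\<in>I. th (f i) *v v)"
  by (induction I rule: infinite_finite_induct) (auto simp: th_mv_add)
lemma th_commute: "th x *v (th y *v v) = th y *v (th x *v v)"
  by (metis th_mv_mult mult.commute)
lemma th_mv_scaleR: "th (r *\<^sub>R x) *v v = complex_of_real r *s (th x *v v)"
  by (metis sm_real th_mv_sm)

lemma th_bounded: "\<exists>K>0. \<forall>f. norm (th f) \<le> K * norm f"
proof -
  have "isCont th 0" using th_cont by (simp add: continuous_on_eq_continuous_at)
  then obtain d where d: "d > 0" "\<And>x. dist x 0 < d \<Longrightarrow> dist (th x) (th 0) < 1"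
    unfolding continuous_at_eps_delta by (meson zero_less_one)
  have "norm (th f) \<le> (2 / d) * norm f" for f
  proof (cases "f = 0")
    case False
    define s where "s = d / (2 * norm f)"
    have s: "s > 0" using False d by (simp add: s_def)
    have "norm (s *\<^sub>R f) < d" using False d by (simp add: s_def)
    then have "norm (th (s *\<^sub>R f)) < 1" using d(2)[of "s *\<^sub>R f"] by simp
    then have "s * norm (th f) < 1" using s by (simp add: th_scaleR)
    then have "norm (th f) < 1 / s" using s by (simp add: field_simps)
    then show ?thesis using False d by (simp add: s_def field_simps)
  qed simp
  then show ?thesis using d by (intro exI[of _ "2/d"]) auto
qed

lemma th_bl: "bounded_linear th"
proof -
  obtain K where "\<And>f. norm (th f) \<le> K * norm f" using th_bounded by blast
  then show ?thesis
    by (intro bounded_linear_intro[where K=K]) (auto simp: th_add th_scaleR mult.commute)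
qed

lemma th_vec_bound: "\<exists>K>0. \<forall>f v. norm (th f *v v) \<le> K * norm f * norm v"
proof -
  obtain K where K: "K > 0" "\<And>f. norm (th f) \<le> K * norm f" using th_bounded by blast
  have "norm (th f *v v) \<le> K * norm f * norm v" for f v
    using mv_frob[of "th f" v] K(2)[of f] by (meson mult_right_mono norm_ge_zero order_trans)
  then show ?thesis using K by blast
qed

lemma th_mv_bl: "bounded_linear (\<lambda>f. th f *v v)"
proof -
  have sc: "(r *\<^sub>R M) *v v = r *\<^sub>R (M *v v)" for r and M :: "complex^'n^'n"
    by (simp add: matrix_vector_mult_def vec_eq_iff scaleR_sum_right)
  have "bounded_linear (\<lambda>M::complex^'n^'n. M *v v)"
    by (rule bounded_linear_intro[where K="norm v"])
       (auto simp: matrix_vector_mult_add_rdistrib sc, metis mv_frob mult.commute)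
  then show ?thesis using bounded_linear_compose th_bl by blast
qed

end



lemma quad_growth_zero:
  fixes a b N :: real
  assumes b: "b > 0" and h: "\<And>t. (a + t * b)^2 \<le> N * b^2 + t^2 * b^2"
  shows "a = 0"
proof (rule ccontr)
  assume a: "a \<noteq> 0"
  define t where "t = (N * b^2 + 1) / (2 * a * b)"
  have "2 * t * a * b = N * b^2 + 1" using a b by (simp add: t_def field_simps)
  moreover have "(a + t * b)^2 = a^2 + 2 * t * a * b + t^2 * b^2"
    by (simp add: power2_eq_square algebra_simps)
  moreover have "a^2 \<ge> 0" by simp
  ultimately show False using h[of t] by linarith
qed

context cs_setting
begin

lemma th_pow_eig: "th f *v v = c *s v \<Longrightarrow> th (f ^ k) *v v = c ^ k *s v"
proof (induction k)
  case 0 then show ?case by (simp add: th_one)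
next
  case (Suc k)
  have "th (f ^ Suc k) *v v = th f *v (th (f ^ k) *v v)" by (simp add: th_mv_mult)
  also have "\<dots> = c ^ k *s (th f *v v)" using Suc by (simp add: vector_scalar_commute)
  also have "\<dots> = c ^ Suc k *s v" using Suc by (simp add: vector_smult_assoc mult.commute)
  finally show ?case .
qed

lemma eig_bound:
  assumes ev: "th f *v v = c *s v" and v: "v \<noteq> 0"
  shows "cmod c \<le> norm f"
proof (rule ccontr)
  assume "\<not> cmod c \<le> norm f"
  then have gt: "cmod c > norm f" by simp
  obtain K where K: "K > 0" "\<And>f v. norm (th f *v v) \<le> K * norm f * norm v"
    using th_vec_bound by blast
  have nv: "norm v > 0" using v by simp
  have pk: "cmod c ^ k \<le> K * norm f ^ k" for k
  proof -
    have "cmod c ^ k * norm v = norm (th (f ^ k) *v v)"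
      using th_pow_eig[OF ev, of k] by (simp add: norm_smult_vec norm_power)
    also have "\<dots> \<le> K * norm (f ^ k) * norm v" by (rule K(2))
    also have "\<dots> \<le> K * norm f ^ k * norm v"
      using K(1) nv by (intro mult_right_mono mult_left_mono norm_power_ineq) auto
    finally show ?thesis using nv by simp
  qed
  show False
  proof (cases "norm f = 0")
    case True
    then show False using pk[of 1] gt by simp
  next
    case False
    then have nf: "norm f > 0" by simp
    define q where "q = cmod c / norm f"
    have q1: "q > 1" using gt nf by (simp add: q_def)
    obtain k where k: "K < q ^ k" using real_arch_pow[OF q1] by blast
    have "q ^ k * norm f ^ k = cmod c ^ k" using nf by (simp add: q_def power_divide)
    then have "q ^ k * norm f ^ k \<le> K * norm f ^ k" using pk[of k] by simp
    then have "q ^ k \<le> K" using nf by simp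
    then show False using k by simp
  qed
qed

lemma sa_shift_norm:
  assumes h: "st h = h"
  shows "(norm (h + sm (\<i> * complex_of_real t) 1))^2 \<le> (norm h)^2 + t^2"
proof -
  define z where "z = h + sm (\<i> * complex_of_real t) 1"
  have sz: "st z = h + sm (- (\<i> * complex_of_real t)) 1"
    by (simp add: z_def st_add h st_sm1)
  have "st z * z = h * h + (sm (- (\<i> * complex_of_real t)) 1 + sm (\<i> * complex_of_real t) 1) * h
        + sm (- (\<i> * complex_of_real t)) 1 * sm (\<i> * complex_of_real t) 1"
    unfolding sz by (simp add: z_def algebra_simps)
  also have "\<dots> = h * h + sm (complex_of_real (t^2)) 1"
  proof -
    have "- (\<i> * complex_of_real t) * (\<i> * complex_of_real t) = complex_of_real (t^2)"
      by (simp add: power2_eq_square algebra_simps)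
    then show ?thesis by (simp add: sm1_mult flip: sm_addl)
  qed
  finally have "st z * z = h * h + (t^2) *\<^sub>R 1" by (simp add: sm_real del: of_real_power)
  then have "(norm z)^2 = norm (h * h + (t^2) *\<^sub>R 1)" by (metis cstar)
  also have "\<dots> \<le> norm (h * h) + t^2" 
    using norm_triangle_ineq[of "h * h" "(t^2) *\<^sub>R 1"] by simp
  also have "\<dots> \<le> (norm h)^2 + t^2"
    using norm_mult_ineq[of h h] by (simp add: power2_eq_square)
  finally show ?thesis by (simp add: z_def)
qed

lemma eig_real:
  assumes h: "st h = h" and ev: "th h *v v = c *s v" and v: "v \<noteq> 0"
  shows "Im c = 0"
proof (rule quad_growth_zero[where b=1 and N="(norm h)^2"])
  fix t :: real
  define z where "z = h + sm (\<i> * complex_of_real t) 1"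
  have "th z *v v = (c + \<i> * complex_of_real t) *s v"
    by (simp add: z_def th_mv_add th_mv_sm1 ev vector_sadd_rdistrib)
  then have "cmod (c + \<i> * complex_of_real t) \<le> norm z" using eig_bound v by blast
  then have "(cmod (c + \<i> * complex_of_real t))^2 \<le> (norm z)^2"
    by (simp add: power_mono)
  also have "\<dots> \<le> (norm h)^2 + t^2" unfolding z_def by (rule sa_shift_norm[OF h])
  finally have "(cmod (c + \<i> * complex_of_real t))^2 \<le> (norm h)^2 + t^2" .
  moreover have "(Im c + t)^2 \<le> (cmod (c + \<i> * complex_of_real t))^2"
    by (simp add: cmod_power2)
  ultimately show "(Im c + t * 1)^2 \<le> (norm h)^2 * 1^2 + t^2 * 1^2" by simp
qed simp

definition Phi :: "'a \<Rightarrow> complex^'n^'n" where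
  "Phi f = mscale (1/2) (th f + adj (th (al f)))"

lemma Phi_mnorm: "mnorm (Phi f) \<le> norm f"
  unfolding Phi_def by (rule th_al_norm)

lemma Phi_cinner_bound: "cmod (cinner (Phi f *v x) x) \<le> norm f * (norm x)^2"
  using cinner_mnorm[of "Phi f" x] Phi_mnorm[of f]
  by (meson mult_right_mono order_trans zero_le_power2)

lemma Phi_mv: "Phi f *v x = (1/2) *s (th f *v x + adj (th (al f)) *v x)"
  by (simp add: Phi_def mscale_mv matrix_vector_mult_add_rdistrib)

lemma Phi_cinner: "cinner (Phi f *v x) x = (1/2) * (cinner (th f *v x) x + cinner x (th (al f) *v x))"
  by (simp add: Phi_mv cinner_scale_left cinner_add_left cinner_adj)

lemma Phi_add: "Phi (f + g) *v x = Phi f *v x + Phi g *v x"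
  by (simp add: Phi_mv th_add al_add adj_add matrix_vector_mult_add_rdistrib vector_sadd_rdistrib
      vector_add_ldistrib algebra_simps)

lemma Phi_sm1: "Phi (sm c 1) *v x = c *s x"
proof -
  have "adj (th (al (sm c 1))) *v x = c *s x"
    by (simp add: al_sm al_one th_sm th_one adj_mscale adj_mat1 mscale_mv)
  then show ?thesis
    by (simp add: Phi_mv th_mv_sm1 vector_smult_assoc flip: vector_sadd_rdistrib)
qed

lemma Phi_herm:
  assumes h: "st h = h"
  shows "Im (cinner (Phi h *v x) x) = 0"
proof (cases "x = 0")
  case True then show ?thesis by simp
next
  case False
  have nx: "(norm x)^2 > 0" using False by simp
  show ?thesis
  proof (rule quad_growth_zero[where b="(norm x)^2" and N="(norm h)^2"])
    fix t :: real
    define z where "z = h + sm (\<i> * complex_of_real t) 1"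
    define q where "q = cinner (Phi h *v x) x"
    have "cinner (Phi z *v x) x = q + \<i> * complex_of_real t * complex_of_real ((norm x)^2)"
      by (simp add: z_def q_def Phi_add Phi_sm1 cinner_add_left cinner_scale_left cinner_self
          del: of_real_power)
    then have "cmod (q + \<i> * complex_of_real (t * (norm x)^2)) \<le> norm z * (norm x)^2"
      using Phi_cinner_bound[of z x] by (simp add: mult.assoc)
    then have "(cmod (q + \<i> * complex_of_real (t * (norm x)^2)))^2 \<le> (norm z * (norm x)^2)^2"
      by (simp add: power_mono)
    also have "\<dots> = (norm z)^2 * ((norm x)^2)^2" by (simp add: power_mult_distrib)
    also have "\<dots> \<le> ((norm h)^2 + t^2) * ((norm x)^2)^2"
      unfolding z_def by (intro mult_right_mono sa_shift_norm[OF h]) simp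
    finally have le: "(cmod (q + \<i> * complex_of_real (t * (norm x)^2)))^2 \<le> ((norm h)^2 + t^2) * ((norm x)^2)^2" .
    have "(Im q + t * (norm x)^2)^2 \<le> (cmod (q + \<i> * complex_of_real (t * (norm x)^2)))^2"
      by (simp add: cmod_power2 del: of_real_power)
    with le show "(Im (cinner (Phi h *v x) x) + t * (norm x)^2)^2 \<le> (norm h)^2 * ((norm x)^2)^2 + t^2 * ((norm x)^2)^2"
      unfolding q_def by (simp add: algebra_simps)
  qed (use nx in simp)
qed

end


lemma smult_vec_bl: "bounded_linear (\<lambda>z::complex. z *s (w::complex^'n))"
proof (rule bounded_linear_intro[where K="norm w"])
  fix r :: real and z :: complex
  show "(r *\<^sub>R z) *s w = r *\<^sub>R (z *s w)"
    by (simp add: vec_eq_iff)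
qed (auto simp: vector_sadd_rdistrib norm_smult_vec)

context cs_setting
begin

lemma th_exp_sums: "(\<lambda>k. th (x^k /\<^sub>R fact k) *v w) sums (th (exp x) *v w)"
  using bounded_linear.sums[OF th_mv_bl exp_converges] .

lemma th_exp_eig:
  assumes ev: "th x *v w = c *s w"
  shows "th (exp x) *v w = exp c *s w"
proof -
  have eq: "th (x^k /\<^sub>R fact k) *v w = (c^k /\<^sub>R fact k) *s w" for k
    using th_pow_eig[OF ev, of k]
    by (simp only: th_mv_scaleR) (simp add: vector_smult_assoc scaleR_conv_of_real)
  have "(\<lambda>k. (c^k /\<^sub>R fact k) *s w) sums (exp c *s w)"
    using bounded_linear.sums[OF smult_vec_bl exp_converges] .
  then have "(\<lambda>k. th (x^k /\<^sub>R fact k) *v w) sums (exp c *s w)" by (simp add: eq)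
  then show ?thesis using th_exp_sums sums_unique2 by blast
qed
lemma th_exp_nil:
  assumes n1: "th x *v w = v" and n2: "th x *v v = 0"
  shows "th (exp x) *v w = w + v"
proof -
  have z: "th (x^k) *v w = 0" if "k \<ge> 2" for k
  proof -
    have "k = (k-2) + 2" using that by simp
    then have "x^k = x^(k-2) * x^2" by (metis power_add)
    moreover have "th (x^2) *v w = 0" by (simp add: power2_eq_square th_mv_mult n1 n2)
    ultimately show ?thesis by (simp add: th_mv_mult)
  qed
  have "(\<lambda>k. th (x^k /\<^sub>R fact k) *v w) sums (\<Sum>k\<in>{0,1}. th (x^k /\<^sub>R fact k) *v w)"
  proof (rule sums_finite)
    fix k :: nat assume "k \<notin> {0, 1}"
    then have "k \<ge> 2" by auto
    then show "th (x^k /\<^sub>R fact k) *v w = 0" by (simp add: th_mv_scaleR z)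
  qed simp
  moreover have "(\<Sum>k\<in>{0,1}. th (x^k /\<^sub>R fact k) *v w) = w + v"
    by (simp add: th_one n1)
  ultimately show ?thesis using th_exp_sums sums_unique2 by metis
qed

lemma st_exp: "st (exp x) = exp (st x)"
proof -
  have "(\<lambda>k. st (x^k /\<^sub>R fact k)) sums st (exp x)"
    using bounded_linear.sums[OF st_bl exp_converges] .
  then have "(\<lambda>k. (st x)^k /\<^sub>R fact k) sums st (exp x)"
    by (simp add: st_scaleR st_power)
  then show ?thesis using exp_converges sums_unique2 by blast
qed

lemma unitary_exp:
  assumes h: "st h = h"
  shows "st (exp (sm (\<i> * complex_of_real t) h)) = exp (sm (- (\<i> * complex_of_real t)) h)"
    and "norm (exp (sm (\<i> * complex_of_real t) h)) = 1"
proof -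
  define u where "u = exp (sm (\<i> * complex_of_real t) h)"
  show su: "st (exp (sm (\<i> * complex_of_real t) h)) = exp (sm (- (\<i> * complex_of_real t)) h)"
    by (simp add: st_exp st_sm h)
  have "st u * u = exp (sm (- (\<i> * complex_of_real t)) h + sm (\<i> * complex_of_real t) h)"
    unfolding u_def su by (rule exp_add_commuting[symmetric]) (simp add: mult.commute)
  also have "\<dots> = 1" by (simp flip: sm_addl)
  finally have "(norm u)^2 = 1" using cstar[of u] by simp
  then have "norm u = 1 \<or> norm u = -1" by (simp add: power2_eq_1_iff)
  then have "norm u = 1" using norm_ge_zero[of u] by linarith
  then show "norm (exp (sm (\<i> * complex_of_real t) h)) = 1"
    unfolding u_def .
qed

lemma no_jordan:
  assumes h: "st h = h" and ev: "th h *v v = r *s v" and gv: "th h *v w = r *s w + v"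
  shows "v = 0"
proof (rule ccontr)
  assume v: "v \<noteq> 0"
  have "Im r = 0" using eig_real[OF h ev v] .
  then obtain \<rho> where r: "r = complex_of_real \<rho>" by (metis complex_is_Real_iff Reals_cases)
  obtain K where K: "K > 0" "\<And>f v. norm (th f *v v) \<le> K * norm f * norm v"
    using th_vec_bound by blast
  have nv: "norm v > 0" using v by simp
  have bound: "\<bar>t\<bar> * norm v \<le> (K + 1) * norm w" for t :: real
  proof -
    define x where "x = sm (\<i> * complex_of_real t) h"
    define y where "y = x - sm (\<i> * complex_of_real t * r) 1"
    have exy: "exp x = exp (sm (\<i> * complex_of_real t * r) 1) * exp y"
      unfolding y_def by (subst exp_add_commuting[symmetric]) (auto simp: mult.commute)
    have y1: "th y *v w = (\<i> * complex_of_real t) *s v"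
      by (simp add: y_def x_def th_mv_diff th_mv_sm th_mv_sm1 th_mv_one gv vector_add_ldistrib vector_smult_assoc)
    have y2: "th y *v v = 0"
      by (simp add: y_def x_def th_mv_diff th_mv_sm th_mv_sm1 th_mv_one ev vector_smult_assoc)
    have "th (exp y) *v w = w + (\<i> * complex_of_real t) *s v"
      using th_exp_nil[OF y1] y2 by (simp add: vector_scalar_commute)
    moreover have "th (sm (\<i> * complex_of_real t * r) 1) *v z = (\<i> * complex_of_real t * r) *s z" for z
      by (rule th_mv_sm1)
    ultimately have thx: "th (exp x) *v w = exp (\<i> * complex_of_real t * r) *s (w + (\<i> * complex_of_real t) *s v)"
      by (simp add: exy th_mv_mult th_exp_eig)
    have ce: "cmod (exp (\<i> * complex_of_real t * r)) = 1"
      unfolding r by (metis norm_exp_i_times mult.assoc of_real_mult)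
    have "norm (th (exp x) *v w) = norm (w + (\<i> * complex_of_real t) *s v)"
      unfolding thx norm_smult_vec ce by simp
    moreover have "norm (th (exp x) *v w) \<le> K * norm w"
      using K(2)[of "exp x" w] unitary_exp(2)[OF h, of t] by (simp add: x_def)
    moreover have "\<bar>t\<bar> * norm v - norm w \<le> norm (w + (\<i> * complex_of_real t) *s v)"
    proof -
      have "norm ((\<i> * complex_of_real t) *s v) \<le> norm (w + (\<i> * complex_of_real t) *s v) + norm w"
        by (metis add_diff_cancel_left' norm_triangle_ineq4 add.commute)
      then show ?thesis by (simp add: norm_smult_vec norm_mult)
    qed
    ultimately show ?thesis using K(1) by argo
  qed
  define t where "t = ((K + 1) * norm w + 1) / norm v"
  have "\<bar>t\<bar> * norm v = (K + 1) * norm w + 1"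
    using nv K(1) by (simp add: t_def abs_of_nonneg)
  then show False using bound[of t] by simp
qed

lemma separate:
  fixes \<mu> \<nu> :: real
  assumes h: "st h = h" and ne: "\<mu> \<noteq> \<nu>"
  shows "\<exists>h'. st h' = h' \<and> norm h' \<le> 1 \<and>
     (\<forall>x. th h *v x = complex_of_real \<mu> *s x \<longrightarrow> th h' *v x = x) \<and>
     (\<forall>x. th h *v x = complex_of_real \<nu> *s x \<longrightarrow> th h' *v x = - x)"
proof -
  define t where "t = pi / (\<mu> - \<nu>)"
  define u where "u = exp (sm (\<i> * complex_of_real t) h)"
  define c where "c = exp (- (\<i> * complex_of_real t * complex_of_real \<mu>))"
  define h' where "h' = (1/2) *\<^sub>R (sm c u + sm (cnj c) (st u))"
  have "- (\<i> * complex_of_real t * complex_of_real \<mu>) = \<i> * complex_of_real (- (t * \<mu>))"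
    by simp
  then have cc: "cmod c = 1" unfolding c_def by (simp only: norm_exp_i_times)
  have sh: "st h' = h'"
    by (simp add: h'_def st_scaleR st_add st_sm add.commute)
  have nu: "norm u = 1" "norm (st u) = 1" using unitary_exp(2)[OF h] by (simp_all add: u_def)
  have nh: "norm h' \<le> 1"
  proof -
    have "norm (sm c u + sm (cnj c) (st u)) \<le> norm (sm c u) + norm (sm (cnj c) (st u))"
      by (rule norm_triangle_ineq)
    also have "\<dots> = 2" by (simp add: sm_norm cc nu)
    finally show ?thesis by (simp add: h'_def)
  qed
  have act: "th h' *v x = ((1/2) * (c * exp (\<i> * complex_of_real t * e) + cnj c * exp (- (\<i> * complex_of_real t * e)))) *s x"
    if ev: "th h *v x = complex_of_real e *s x" for x e
  proof -
    have "th (sm (\<i> * complex_of_real t) h) *v x = (\<i> * complex_of_real t * complex_of_real e) *s x"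
      by (simp add: th_mv_sm ev vector_smult_assoc)
    then have e1: "th u *v x = exp (\<i> * complex_of_real t * complex_of_real e) *s x"
      unfolding u_def by (rule th_exp_eig)
    have "th (sm (- (\<i> * complex_of_real t)) h) *v x = (- (\<i> * complex_of_real t * complex_of_real e)) *s x"
      by (simp add: th_mv_sm ev vector_smult_assoc)
    then have e2: "th (st u) *v x = exp (- (\<i> * complex_of_real t * complex_of_real e)) *s x"
      unfolding u_def unitary_exp(1)[OF h] by (rule th_exp_eig)
    show ?thesis
      by (simp add: h'_def th_mv_scaleR th_mv_add th_mv_sm e1 e2 vector_smult_assoc
          vector_sadd_rdistrib algebra_simps)
  qed
  have ccnj: "cnj c = exp (\<i> * complex_of_real t * complex_of_real \<mu>)"
    by (simp add: c_def exp_cnj)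
  have "th h' *v x = x" if "th h *v x = complex_of_real \<mu> *s x" for x
  proof -
    have "c * exp (\<i> * complex_of_real t * complex_of_real \<mu>) = 1"
      by (simp add: c_def flip: exp_add)
    moreover have "cnj c * exp (- (\<i> * complex_of_real t * complex_of_real \<mu>)) = 1"
      by (simp add: ccnj flip: exp_add)
    ultimately show ?thesis using act[OF that] by simp
  qed
  moreover have "th h' *v x = - x" if "th h *v x = complex_of_real \<nu> *s x" for x
  proof -
    have tt: "t * (\<mu> - \<nu>) = pi" using ne by (simp add: t_def)
    have "c * exp (\<i> * complex_of_real t * complex_of_real \<nu>) = exp (- (\<i> * complex_of_real (t * (\<mu> - \<nu>))))"
      by (simp add: c_def algebra_simps flip: exp_add)
    also have "\<dots> = -1" by (simp add: tt exp_minus)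
    finally have a: "c * exp (\<i> * complex_of_real t * complex_of_real \<nu>) = -1" .
    have "cnj c * exp (- (\<i> * complex_of_real t * complex_of_real \<nu>)) = exp (\<i> * complex_of_real (t * (\<mu> - \<nu>)))"
      by (simp add: ccnj algebra_simps flip: exp_add)
    also have "\<dots> = -1" by (simp add: tt)
    finally have b: "cnj c * exp (- (\<i> * complex_of_real t * complex_of_real \<nu>)) = -1" .
    show ?thesis using act[OF that] a b by (simp add: vector_smult_lneg)
  qed
  ultimately show ?thesis using sh nh by blast
qed


end


context cs_setting begin

definition pev :: "complex poly \<Rightarrow> 'a \<Rightarrow> 'a" where
  "pev p x = poly (map_poly (\<lambda>c. sm c 1) p) x"

lemma pev_pCons: "pev (pCons a p) x = sm a 1 + x * pev p x"
  by (simp add: pev_def map_poly_pCons)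

lemma pev_0[simp]: "pev 0 x = 0"
  by (simp add: pev_def)

lemma pev_smult: "pev (smult a p) x = sm a 1 * pev p x"
proof (induction p)
  case 0 then show ?case by simp
next
  case (pCons b p)
  then show ?case by (simp add: pev_pCons sm1_mult algebra_simps)
qed

lemma pev_add: "pev (p + q) x = pev p x + pev q x"
proof (induction p arbitrary: q)
  case 0 then show ?case by simp
next
  case (pCons a p)
  obtain b q' where q: "q = pCons b q'" by (cases q) auto
  show ?case using pCons.IH[of q'] by (simp add: q pev_pCons sm_addl distrib_left add_ac)
qed

lemma pev_mult: "pev (p * q) x = pev p x * pev q x"
proof (induction p)
  case 0 then show ?case by simp
next
  case (pCons a p)
  then show ?case by (simp add: pev_pCons pev_add pev_smult algebra_simps)
qed

lemma pev_one[simp]: "pev 1 x = 1"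
  by (simp add: one_pCons pev_pCons)

lemma pev_const: "pev [:c:] x = sm c 1"
  by (simp add: pev_pCons)

lemma pev_lin: "pev [:-z, 1:] x = x - sm z 1"
  by (simp add: pev_pCons sm_neg_left)

lemma pev_X: "pev [:0, 1:] x = x"
  by (simp add: pev_pCons)

lemma pev_sum: "pev (\<Sum>i\<in>I. f i) x = (\<Sum>i\<in>I. pev (f i) x)"
  by (induction I rule: infinite_finite_induct) (auto simp: pev_add)

lemma pev_prod: "pev (\<Prod>i\<in>I. f i) x = (\<Prod>i\<in>I. pev (f i) x)"
  by (induction I rule: infinite_finite_induct) (auto simp: pev_mult)

lemma pev_power: "pev (p ^ k) x = (pev p x) ^ k"
  by (induction k) (auto simp: pev_mult)

lemma pev_monom: "pev (monom c k) x = sm c 1 * x ^ k"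
  by (simp add: monom_altdef pev_smult pev_power pev_X)

lemma lagrange_one:
  fixes R :: "complex set"
  assumes R: "finite R" "R \<noteq> {}"
  shows "(\<Sum>l\<in>R. \<Prod>z\<in>R-{l}. smult (1/(l - z)) [:-z, 1:]) = 1"
proof (rule poly_eqI_degree[where A=R])
  fix x assume x: "x \<in> R"
  have "poly (\<Sum>l\<in>R. \<Prod>z\<in>R-{l}. smult (1/(l - z)) [:-z, 1:]) x
        = (\<Sum>l\<in>R. \<Prod>z\<in>R-{l}. (x - z) / (l - z))"
    by (simp add: poly_sum poly_prod diff_divide_distrib)
  also have "\<dots> = (\<Prod>z\<in>R-{x}. (x - z) / (x - z)) + (\<Sum>l\<in>R-{x}. \<Prod>z\<in>R-{l}. (x - z) / (l - z))"
    using R x by (simp add: sum.remove)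
  also have "(\<Sum>l\<in>R-{x}. \<Prod>z\<in>R-{l}. (x - z) / (l - z)) = 0"
  proof (intro sum.neutral ballI)
    fix l assume l: "l \<in> R - {x}"
    then have "x \<in> R - {l}" using x by auto
    then show "(\<Prod>z\<in>R-{l}. (x - z) / (l - z)) = 0"
      using R by (intro prod_zero) auto
  qed
  also have "(\<Prod>z\<in>R-{x}. (x - z) / (x - z)) = 1"
    by (intro prod.neutral) auto
  finally show "poly (\<Sum>l\<in>R. \<Prod>z\<in>R-{l}. smult (1/(l - z)) [:-z, 1:]) x = poly 1 x" by simp
next
  have "degree (\<Sum>l\<in>R. \<Prod>z\<in>R-{l}. smult (1/(l - z)) [:-z, 1:]) \<le> card R - 1"
  proof (intro degree_sum_le R(1))
    fix l assume l: "l \<in> R"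
    have "degree (\<Prod>z\<in>R-{l}. smult (1/(l - z)) [:-z, 1:]) \<le> (\<Sum>z\<in>R-{l}. degree (smult (1/(l - z)) [:-z, 1:]))"
      using degree_prod_sum_le[of "R-{l}" "\<lambda>z. smult (1/(l - z)) [:-z, 1:]"] R by (simp add: o_def)
    also have "\<dots> \<le> (\<Sum>z\<in>R-{l}. 1)"
      by (intro sum_mono) (simp add: degree_smult_le)
    also have "\<dots> = card R - 1" using R l by simp
    finally show "degree (\<Prod>z\<in>R-{l}. smult (1/(l - z)) [:-z, 1:]) \<le> card R - 1" .
  qed
  moreover have "card R > 0" using R by (simp add: card_gt_0_iff)
  ultimately show "degree (\<Sum>l\<in>R. \<Prod>z\<in>R-{l}. smult (1/(l - z)) [:-z, 1:]) < card R" by linarith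
next
  show "degree (1::complex poly) < card R" using R by (simp add: card_gt_0_iff)
qed

lemma pev_minus: "pev (- p) x = - pev p x"
proof -
  have "pev (- p) x = pev (smult (-1) p) x" by (metis smult_1_left smult_minus_left)
  also have "\<dots> = - pev p x" by (simp only: pev_smult sm_neg_left sm_one) simp
  finally show ?thesis .
qed

lemma pev_diff: "pev (p - q) x = pev p x - pev q x"
  using pev_add[of p "-q" x] by (simp add: pev_minus)

lemma th_sm1_mult: "th (sm c 1 * y) *v v = c *s (th y *v v)"
  by (simp add: th_mv_mult th_mv_sm1)

lemma annihilator: "\<exists>p. p \<noteq> 0 \<and> th (pev p g) = 0"
proof -
  define N where "N = DIM(complex^'n^'n)"
  define M where "M k = th (g^k)" for k
  have mth: "th (pev (monom (complex_of_real r) k) g) = r *\<^sub>R M k" for r k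
    by (simp add: pev_monom M_def sm_real th_scaleR)
  show ?thesis
  proof (cases "inj_on M {..N}")
    case True
    let ?S = "M ` {..N}"
    have fin: "finite ?S" by simp
    have "card ?S = N + 1" using True card_image by fastforce
    then have "\<not> independent ?S" using independent_bound[of ?S] N_def by auto
    then obtain u where u: "\<exists>v\<in>?S. u v \<noteq> 0" "(\<Sum>v\<in>?S. u v *\<^sub>R v) = 0"
      using real_vector.dependent_finite[OF fin] by auto
    define p where "p = (\<Sum>k\<le>N. monom (complex_of_real (u (M k))) k)"
    have "th (pev p g) = (\<Sum>k\<le>N. u (M k) *\<^sub>R M k)"
      by (simp add: p_def pev_sum th_sum mth)
    also have "\<dots> = (\<Sum>v\<in>?S. u v *\<^sub>R v)"
      by (simp add: sum.reindex[OF True])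
    finally have z: "th (pev p g) = 0" using u(2) by simp
    obtain k0 where k0: "k0 \<le> N" "u (M k0) \<noteq> 0" using u(1) by auto
    have "coeff p k0 = complex_of_real (u (M k0))"
      using k0(1) by (simp add: p_def coeff_sum)
    then have "p \<noteq> 0" using k0(2) by auto
    then show ?thesis using z by blast
  next
    case False
    then obtain i j where ij: "i \<le> N" "j \<le> N" "i \<noteq> j" "M i = M j"
      unfolding inj_on_def by auto
    define p where "p = monom 1 i - monom (1::complex) j"
    have "coeff p i = 1" using ij by (simp add: p_def)
    then have "p \<noteq> 0" by auto
    moreover have "th (pev p g) = 0"
      using mth[of 1 i] mth[of 1 j] ij(4) by (simp add: p_def pev_diff th_diff)
    ultimately show ?thesis by blast
  qed
qed

lemma reduce:
  assumes g: "st g = g" and R: "finite R"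
  shows "(\<forall>z\<in>R. m z \<ge> 1) \<Longrightarrow> (\<forall>v. th (\<Prod>z\<in>R. (g - sm z 1)^(m z)) *v v = 0)
         \<Longrightarrow> (\<forall>v. th (\<Prod>z\<in>R. (g - sm z 1)) *v v = 0)"
proof (induction "sum m R" arbitrary: m rule: less_induct)
  case less
  show ?case
  proof (cases "\<forall>z\<in>R. m z = 1")
    case True
    then have "(\<Prod>z\<in>R. (g - sm z 1)^(m z)) = (\<Prod>z\<in>R. (g - sm z 1))"
      by (intro prod.cong) auto
    then show ?thesis using less.prems(2) by simp
  next
    case False
    then obtain z0 where z0: "z0 \<in> R" "m z0 \<ge> 2" using less.prems(1) by force
    define m' where "m' = m(z0 := m z0 - 1)"
    define D where "D = g - sm z0 1"
    define S where "S = D^(m z0 - 2) * (\<Prod>z\<in>R-{z0}. (g - sm z 1)^(m z))"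
    have "(\<Prod>z\<in>R. (g - sm z 1)^(m z)) = D^(m z0) * (\<Prod>z\<in>R-{z0}. (g - sm z 1)^(m z))"
      using R z0 by (simp add: prod.remove D_def)
    also have "D^(m z0) = D^2 * D^(m z0 - 2)"
    proof -
      have "m z0 = 2 + (m z0 - 2)" using z0 by simp
      then show ?thesis by (metis power_add)
    qed
    finally have P: "(\<Prod>z\<in>R. (g - sm z 1)^(m z)) = D^2 * S" by (simp add: S_def mult.assoc)
    have "(\<Prod>z\<in>R. (g - sm z 1)^(m' z)) = D^(m' z0) * (\<Prod>z\<in>R-{z0}. (g - sm z 1)^(m' z))"
      using R z0 by (simp add: prod.remove D_def)
    also have "(\<Prod>z\<in>R-{z0}. (g - sm z 1)^(m' z)) = (\<Prod>z\<in>R-{z0}. (g - sm z 1)^(m z))"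
      by (intro prod.cong) (auto simp: m'_def)
    also have "D^(m' z0) = D * D^(m z0 - 2)"
    proof -
      have "m' z0 = Suc (m z0 - 2)" using z0 by (simp add: m'_def)
      then show ?thesis by simp
    qed
    finally have P': "(\<Prod>z\<in>R. (g - sm z 1)^(m' z)) = D * S" by (simp add: S_def mult.assoc)
    have hyp': "\<forall>v. th (\<Prod>z\<in>R. (g - sm z 1)^(m' z)) *v v = 0"
    proof
      fix v
      define u where "u = th S *v v"
      have "th D *v (th D *v u) = 0"
        using less.prems(2) P by (simp add: u_def power2_eq_square th_mv_mult)
      moreover have "th g *v x = th D *v x + z0 *s x" for x
        by (simp add: D_def th_mv_diff th_mv_sm1)
      ultimately have "th D *v u = 0"
        using no_jordan[OF g, of "th D *v u" z0 u] by simp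
      then show "th (\<Prod>z\<in>R. (g - sm z 1)^(m' z)) *v v = 0"
        by (simp add: P' th_mv_mult u_def)
    qed
    have "sum m' R < sum m R"
    proof -
      have "sum m' R = m' z0 + sum m' (R - {z0})" using R z0 by (simp add: sum.remove)
      also have "sum m' (R - {z0}) = sum m (R - {z0})" by (intro sum.cong) (auto simp: m'_def)
      finally have "sum m' R = m z0 - 1 + sum m (R - {z0})" by (simp add: m'_def)
      moreover have "sum m R = m z0 + sum m (R - {z0})" using R z0 by (simp add: sum.remove)
      ultimately show ?thesis using z0 by simp
    qed
    moreover have "\<forall>z\<in>R. m' z \<ge> 1" using less.prems(1) z0 by (auto simp: m'_def)
    ultimately show ?thesis using less.hyps hyp' by blast
  qed
qed

lemma sa_decomp:
  assumes g: "st g = g"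
  shows "\<exists>R e. finite R \<and> (\<forall>v. (\<Sum>l\<in>R. th (e l) *v v) = v) \<and>
           (\<forall>l\<in>R. \<forall>v. th g *v (th (e l) *v v) = l *s (th (e l) *v v))"
proof -
  obtain p where p: "p \<noteq> 0" "th (pev p g) = 0" using annihilator by blast
  define R where "R = {z. poly p z = 0}"
  have R: "finite R" using poly_roots_finite[OF p(1)] by (simp add: R_def)
  have "pev p g = pev (smult (lead_coeff p) (\<Prod>z\<in>R. [:-z, 1:] ^ order z p)) g"
    using complex_poly_decompose[of p] by (simp add: R_def)
  also have "\<dots> = sm (lead_coeff p) 1 * (\<Prod>z\<in>R. (g - sm z 1)^(order z p))"
    by (simp add: pev_smult pev_prod pev_power pev_lin)
  finally have pe: "pev p g = sm (lead_coeff p) 1 * (\<Prod>z\<in>R. (g - sm z 1)^(order z p))" .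
  have lc: "lead_coeff p \<noteq> 0" using p(1) by simp
  have z1: "th (\<Prod>z\<in>R. (g - sm z 1)^(order z p)) *v v = 0" for v
  proof -
    have "th (pev p g) *v v = 0" using p(2) by simp
    then have "lead_coeff p *s (th (\<Prod>z\<in>R. (g - sm z 1)^(order z p)) *v v) = 0"
      by (simp only: pe th_sm1_mult)
    then show ?thesis using p(1) by simp
  qed
  have ord: "\<forall>z\<in>R. order z p \<ge> 1"
  proof
    fix z assume "z \<in> R"
    then have "order z p > 0" using order_gt_0_iff[OF p(1)] by (simp add: R_def)
    then show "order z p \<ge> 1" by simp
  qed
  have z2: "\<forall>v. th (\<Prod>z\<in>R. (g - sm z 1)) *v v = 0"
    using reduce[OF g R ord] z1 by blast
  have Rne: "R \<noteq> {}"
  proof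
    assume "R = {}"
    then have "\<forall>v. v = (0::complex^'n)" using z2 by (simp add: th_one)
    moreover have "axis undefined (1::complex) \<noteq> 0" by (simp add: axis_eq_0_iff)
    ultimately show False by blast
  qed
  define e where "e l = (\<Prod>z\<in>R-{l}. sm (1/(l - z)) 1 * (g - sm z 1))" for l
  have sum1: "(\<Sum>l\<in>R. e l) = 1"
  proof -
    have "(\<Sum>l\<in>R. e l) = pev (\<Sum>l\<in>R. \<Prod>z\<in>R-{l}. smult (1/(l - z)) [:-z, 1:]) g"
      by (simp only: e_def pev_sum pev_prod pev_smult pev_lin)
    also have "\<dots> = 1" by (simp only: lagrange_one[OF R Rne] pev_one)
    finally show ?thesis .
  qed
  have eig: "th g *v (th (e l) *v v) = l *s (th (e l) *v v)" if l: "l \<in> R" for l v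
  proof -
    define c where "c = (\<Prod>z\<in>R-{l}. 1/(l - z))"
    have el: "e l = sm c 1 * (\<Prod>z\<in>R-{l}. (g - sm z 1))"
      by (simp add: e_def c_def prod.distrib sm1_prod)
    have "(g - sm l 1) * e l = sm c 1 * ((g - sm l 1) * (\<Prod>z\<in>R-{l}. (g - sm z 1)))"
      by (simp add: el mult.left_commute)
    also have "(g - sm l 1) * (\<Prod>z\<in>R-{l}. (g - sm z 1)) = (\<Prod>z\<in>R. (g - sm z 1))"
      using R l by (simp add: prod.remove)
    finally have "th ((g - sm l 1) * e l) *v v = 0" using z2 by (simp add: th_sm1_mult)
    then show ?thesis
      by (simp add: left_diff_distrib th_mv_diff th_sm1_mult th_mv_mult th_mv_sm1)
  qed
  have "\<forall>v. (\<Sum>l\<in>R. th (e l) *v v) = v"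
    using sum1 by (simp flip: th_mv_sum add: th_one)
  then show ?thesis using R eig by blast
qed

end


context cs_setting begin

lemma Q_formula:
  assumes a1: "th h *v a = a" and a2: "th (al h) *v a = ca *s a"
    and b1: "th h *v b = - b" and b2: "th (al h) *v b = cb *s b"
  shows "2 * cinner (Phi h *v (a + s *s b)) (a + s *s b) =
     (1 + cnj ca) * cinner a a + s * cnj s * (cnj cb - 1) * cinner b b
     + cnj s * cinner a b * (1 + cnj cb) + s * cnj (cinner a b) * (cnj ca - 1)"
proof -
  have t1: "th h *v (a + s *s b) = a - s *s b"
    by (simp add: matrix_vector_right_distrib vector_scalar_commute a1 b1 vector_smult_rneg)
  have t2: "th (al h) *v (a + s *s b) = ca *s a + (s * cb) *s b"
    by (simp add: matrix_vector_right_distrib vector_scalar_commute a2 b2 vector_smult_assoc)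
  have ba: "cinner b a = cnj (cinner a b)" by (simp add: cinner_cnj)
  show ?thesis
    unfolding Phi_cinner t1 t2
    by (simp add: cinner_add_left cinner_add_right cinner_diff_left cinner_scale_left
        cinner_scale_right ba algebra_simps)
qed

lemma pair_orth:
  assumes h: "st h = h" "norm h \<le> 1"
    and a1: "th h *v a = a" and a2: "th (al h) *v a = ca *s a"
    and b1: "th h *v b = - b" and b2: "th (al h) *v b = cb *s b"
  shows "cinner a b = 0"
proof (cases "a = 0 \<or> b = 0")
  case True then show ?thesis by auto
next
  case False
  then have a0: "a \<noteq> 0" and b0: "b \<noteq> 0" by auto
  define na where "na = (norm a)^2"
  define nb where "nb = (norm b)^2"
  define z where "z = cinner a b"
  have na: "na > 0" using a0 by (simp add: na_def)
  have nb: "nb > 0" using b0 by (simp add: nb_def)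
  have caa: "cinner a a = complex_of_real na" by (simp add: na_def cinner_self)
  have cbb: "cinner b b = complex_of_real nb" by (simp add: nb_def cinner_self)
  have ca1: "cmod ca \<le> 1" using eig_bound[OF a2 a0] al_contr[of h] h(2) by linarith
  have cb1: "cmod cb \<le> 1" using eig_bound[OF b2 b0] al_contr[of h] h(2) by linarith
  note Q = Q_formula[OF a1 a2 b1 b2]
  have herm: "Im (cinner (Phi h *v x) x) = 0" for x using Phi_herm[OF h(1)] .
  have bnd: "cmod (cinner (Phi h *v x) x) \<le> (norm x)^2" for x
    using Phi_cinner_bound[of h x] h(2)
    by (meson mult_right_mono order_trans zero_le_power2 mult_left_le_one_le norm_ge_zero)
  have ImQ: "Im (2 * cinner (Phi h *v x) x) = 0" for x using herm[of x] by simp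
  have "Im ((1 + cnj ca) * complex_of_real na) = 0"
  proof -
    have "(1 + cnj ca) * complex_of_real na = 2 * cinner (Phi h *v a) a" using Q[of 0] by (simp add: caa)
    then show ?thesis by (metis ImQ)
  qed
  then have "Im ca = 0" using na by simp
  then obtain \<alpha> where al: "ca = complex_of_real \<alpha>" by (metis complex_is_Real_iff Reals_cases)
  have "Im ((cnj cb - 1) * complex_of_real nb) = 0"
  proof -
    have "(cnj cb - 1) * complex_of_real nb = 2 * cinner (Phi h *v b) b"
      by (simp add: Phi_cinner b1 b2 cinner_minus_left cinner_scale_right cbb algebra_simps)
    then show ?thesis by (metis ImQ)
  qed
  then have "Im cb = 0" using nb by simp
  then obtain \<beta> where be: "cb = complex_of_real \<beta>" by (metis complex_is_Real_iff Reals_cases)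
  have abs_al: "\<bar>\<alpha>\<bar> \<le> 1" using ca1 al by simp
  have abs_be: "\<bar>\<beta>\<bar> \<le> 1" using cb1 be by simp
  show ?thesis
  proof (rule ccontr)
    assume z0: "cinner a b \<noteq> 0"
    define nz where "nz = (cmod z)^2"
    have nz: "nz > 0" using z0 by (simp add: nz_def z_def)
    have ba: "cinner b a = cnj z" by (simp add: z_def cinner_cnj)
    have zz: "z * cnj z = complex_of_real nz" by (simp add: nz_def complex_mult_cnj cmod_power2)
    have zz2: "z * (cnj z * w) = complex_of_real nz * w" for w
      by (simp add: mult.assoc[symmetric] zz)
    have "Im (2 * cinner (Phi h *v (a + (\<i> * z) *s b)) (a + (\<i> * z) *s b)) = (\<alpha> - \<beta> - 2) * nz"
      unfolding Q by (simp add: al be caa cbb z_def[symmetric] algebra_simps zz)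
    then have "\<alpha> - \<beta> = 2" using ImQ nz by simp
    then have al1: "\<alpha> = 1" and be1: "\<beta> = -1" using abs_al abs_be by auto
    define t where "t = (na + 1) / nz"
    define x where "x = a + (- (complex_of_real t * z)) *s b"
    have Qx: "2 * cinner (Phi h *v x) x = complex_of_real (2 * na - 2 * t^2 * nz * nb)"
      unfolding x_def Q by (simp add: al be al1 be1 caa cbb z_def[symmetric] algebra_simps zz power2_eq_square)
    have "complex_of_real ((norm x)^2) = cinner x x" by (simp add: cinner_self)
    also have "\<dots> = complex_of_real (na - 2 * t * nz + t^2 * nz * nb)"
      unfolding x_def
      by (simp add: cinner_add_left cinner_add_right cinner_scale_left cinner_scale_right caa cbb
          cinner_diff_left cinner_diff_right z_def[symmetric] ba algebra_simps zz zz2 power2_eq_square)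
    finally have nx: "(norm x)^2 = na - 2 * t * nz + t^2 * nz * nb" by (simp only: of_real_eq_iff)
    have "-((norm x)^2) \<le> Re (cinner (Phi h *v x) x)"
      using bnd[of x] abs_Re_le_cmod[of "cinner (Phi h *v x) x"] by linarith
    moreover have "Re (cinner (Phi h *v x) x) = na - t^2 * nz * nb"
      using arg_cong[OF Qx, of Re] by simp
    ultimately have "0 \<le> 2 * na - 2 * t * nz" using nx by simp
    moreover have "t * nz = na + 1" using nz by (simp add: t_def)
    ultimately show False by simp
  qed
qed

lemma mv_sum: "M *v (\<Sum>i\<in>I. f i) = (\<Sum>i\<in>I. M *v f i)"
  by (induction I rule: infinite_finite_induct) (auto simp: matrix_vector_right_distrib)

lemma re_im_split: "\<exists>f1 f2. st f1 = f1 \<and> st f2 = f2 \<and> f = f1 + sm \<i> f2"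
proof -
  define f1 where "f1 = (1/2) *\<^sub>R (f + st f)"
  define f2 where "f2 = sm (- (\<i>/2)) (f - st f)"
  have s1: "st f1 = f1" by (simp add: f1_def st_scaleR st_add add.commute)
  have "st f2 = sm (\<i>/2) (st f - f)" by (simp add: f2_def st_sm st_diff)
  also have "\<dots> = f2" by (simp add: f2_def sm_neg_left sm_diff_right)
  finally have s2: "st f2 = f2" .
  have "\<i> * (- (\<i>/2)) = complex_of_real (1/2)" by simp
  then have "sm \<i> f2 = (1/2) *\<^sub>R (f - st f)" by (metis f2_def sm_assoc sm_real)
  then have "f1 + sm \<i> f2 = (1/2) *\<^sub>R (f + st f) + (1/2) *\<^sub>R (f - st f)" by (simp add: f1_def)
  also have "\<dots> = (1/2) *\<^sub>R ((f + st f) + (f - st f))" by (simp only: scaleR_right_distrib)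
  also have "(f + st f) + (f - st f) = f + f" by simp
  also have "(1/2) *\<^sub>R (f + f) = f" by (rule scaleR_half_double)
  finally show ?thesis using s1 s2 by metis
qed

lemma eig_orth:
  fixes \<mu> \<nu> :: real
  assumes h: "st h = h" and a: "th h *v a = complex_of_real \<mu> *s a"
    and b: "th h *v b = complex_of_real \<nu> *s b" and ne: "\<mu> \<noteq> \<nu>"
  shows "cinner a b = 0"
proof -
  obtain h' where h': "st h' = h'" "norm h' \<le> 1"
    "\<forall>x. th h *v x = complex_of_real \<mu> *s x \<longrightarrow> th h' *v x = x"
    "\<forall>x. th h *v x = complex_of_real \<nu> *s x \<longrightarrow> th h' *v x = - x"
    using separate[OF h ne] by blast
  have ha: "th h' *v a = a" using h'(3) a by blast
  have hb: "th h' *v b = - b" using h'(4) b by blast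
  obtain g1 g2 where g: "st g1 = g1" "st g2 = g2" "al h' = g1 + sm \<i> g2"
    using re_im_split by blast
  obtain R1 e1 where d1: "finite R1" "\<forall>v. (\<Sum>l\<in>R1. th (e1 l) *v v) = v"
    "\<forall>l\<in>R1. \<forall>v. th g1 *v (th (e1 l) *v v) = l *s (th (e1 l) *v v)"
    using sa_decomp[OF g(1)] by blast
  obtain R2 e2 where d2: "finite R2" "\<forall>v. (\<Sum>l\<in>R2. th (e2 l) *v v) = v"
    "\<forall>l\<in>R2. \<forall>v. th g2 *v (th (e2 l) *v v) = l *s (th (e2 l) *v v)"
    using sa_decomp[OF g(2)] by blast
  define P where "P l1 l2 x = th (e2 l2) *v (th (e1 l1) *v x)" for l1 l2 x
  have split: "(\<Sum>l1\<in>R1. \<Sum>l2\<in>R2. P l1 l2 x) = x" for x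
    using d1(2) d2(2) by (simp add: P_def)
  have Pg: "th (al h') *v P l1 l2 x = (l1 + \<i> * l2) *s P l1 l2 x" if l: "l1 \<in> R1" "l2 \<in> R2" for l1 l2 x
  proof -
    have "th g1 *v P l1 l2 x = l1 *s P l1 l2 x"
      using d1(3) l by (simp add: P_def th_commute[of g1 "e2 l2"] vector_scalar_commute)
    moreover have "th g2 *v P l1 l2 x = l2 *s P l1 l2 x"
      using d2(3) l by (simp add: P_def)
    ultimately show ?thesis
      by (simp add: g(3) th_mv_add th_mv_sm vector_sadd_rdistrib vector_smult_assoc)
  qed
  have Ph: "th h' *v P l1 l2 x = P l1 l2 (th h' *v x)" for l1 l2 x
    by (simp add: P_def th_commute[of h' "e2 l2"] th_commute[of h' "e1 l1"])
  have Pneg: "P l1 l2 (- x) = - P l1 l2 x" for l1 l2 x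
    by (simp add: P_def matrix_vector_mult_diff_distrib[of _ 0, simplified])
  have orth: "cinner (P l1 l2 a) (P m1 m2 b) = 0"
    if "l1 \<in> R1" "l2 \<in> R2" "m1 \<in> R1" "m2 \<in> R2" for l1 l2 m1 m2
    using pair_orth[OF h'(1) h'(2), of "P l1 l2 a" "l1 + \<i> * l2" "P m1 m2 b" "m1 + \<i> * m2"]
      Pg[OF that(1,2)] Pg[OF that(3,4)] Ph ha hb Pneg by simp
  have "cinner (\<Sum>l1\<in>R1. \<Sum>l2\<in>R2. P l1 l2 a) (\<Sum>m1\<in>R1. \<Sum>m2\<in>R2. P m1 m2 b) = 0"
    by (simp add: cinner_sum_left cinner_sum_right orth)
  then show ?thesis by (simp only: split)
qed

lemma decomp_orth:
  assumes h: "st h = h" and l: "th h *v x = l *s x" and m: "th h *v y = m *s y" and ne: "l \<noteq> m"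
  shows "cinner x y = 0"
proof (cases "x = 0 \<or> y = 0")
  case True then show ?thesis by auto
next
  case False
  have "Im l = 0" using eig_real[OF h l] False by auto
  then obtain \<mu> where mu: "l = complex_of_real \<mu>" by (metis complex_is_Real_iff Reals_cases)
  have "Im m = 0" using eig_real[OF h m] False by auto
  then obtain \<nu> where nu: "m = complex_of_real \<nu>" by (metis complex_is_Real_iff Reals_cases)
  show ?thesis using eig_orth[OF h, of x \<mu> y \<nu>] l m mu nu ne by auto
qed

lemma sa_herm:
  assumes h: "st h = h"
  shows "cinner (th h *v x) y = cinner x (th h *v y)"
proof -
  obtain R e where d: "finite R" "\<forall>v. (\<Sum>l\<in>R. th (e l) *v v) = v"
    "\<forall>l\<in>R. \<forall>v. th h *v (th (e l) *v v) = l *s (th (e l) *v v)"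
    using sa_decomp[OF h] by blast
  have trm: "l * cinner (th (e l) *v x) (th (e m) *v y) = cnj m * cinner (th (e l) *v x) (th (e m) *v y)"
    if lm: "l \<in> R" "m \<in> R" for l m
  proof (cases "l = m \<or> th (e m) *v y = 0")
    case True
    then show ?thesis
    proof
      assume "l = m"
      show ?thesis
      proof (cases "th (e m) *v y = 0")
        case False
        have "Im m = 0" using eig_real[OF h _ False] d(3) lm by blast
        then show ?thesis using \<open>l = m\<close> by (simp add: complex_eq_iff)
      qed simp
    qed simp
  next
    case False
    have "Im m = 0" using eig_real[OF h _] d(3) lm False by blast
    then have cm: "cnj m = m" by (simp add: complex_eq_iff)
    have "cinner (th (e l) *v x) (th (e m) *v y) = 0"
      using decomp_orth[OF h] d(3) lm False by blast
    then show ?thesis by simp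
  qed
  have hv: "th h *v v = (\<Sum>l\<in>R. l *s (th (e l) *v v))" for v
  proof -
    have "th h *v v = th h *v (\<Sum>l\<in>R. th (e l) *v v)" using d(2) by simp
    also have "\<dots> = (\<Sum>l\<in>R. th h *v (th (e l) *v v))" by (rule mv_sum)
    also have "\<dots> = (\<Sum>l\<in>R. l *s (th (e l) *v v))" using d(3) by (intro sum.cong) auto
    finally show ?thesis .
  qed
  have "cinner (th h *v x) y = cinner (\<Sum>l\<in>R. l *s (th (e l) *v x)) (\<Sum>m\<in>R. th (e m) *v y)"
    by (simp only: hv d(2))
  also have "\<dots> = (\<Sum>l\<in>R. \<Sum>m\<in>R. l * cinner (th (e l) *v x) (th (e m) *v y))"
    by (simp add: cinner_sum_left cinner_sum_right cinner_scale_left) (rule sum.swap)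
  also have "\<dots> = (\<Sum>l\<in>R. \<Sum>m\<in>R. cnj m * cinner (th (e l) *v x) (th (e m) *v y))"
    by (intro sum.cong refl trm)
  also have "\<dots> = cinner (\<Sum>l\<in>R. th (e l) *v x) (\<Sum>m\<in>R. m *s (th (e m) *v y))"
    by (simp add: cinner_sum_left cinner_sum_right cinner_scale_right sum_distrib_left) (rule sum.swap)
  also have "\<dots> = cinner x (th h *v y)"
    by (simp only: hv d(2))
  finally show ?thesis .
qed

end



lemma pythag:
  fixes w :: "'i \<Rightarrow> complex^'n"
  assumes R: "finite R" and o: "\<And>l m. l \<in> R \<Longrightarrow> m \<in> R \<Longrightarrow> l \<noteq> m \<Longrightarrow> cinner (w l) (w m) = 0"
  shows "(norm (\<Sum>l\<in>R. w l))^2 = (\<Sum>l\<in>R. (norm (w l))^2)"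
proof -
  have "complex_of_real ((norm (\<Sum>l\<in>R. w l))^2) = cinner (\<Sum>l\<in>R. w l) (\<Sum>m\<in>R. w m)"
    by (simp add: cinner_self)
  also have "\<dots> = (\<Sum>l\<in>R. \<Sum>m\<in>R. cinner (w l) (w m))"
    by (simp add: cinner_sum_left cinner_sum_right) (rule sum.swap)
  also have "\<dots> = (\<Sum>l\<in>R. cinner (w l) (w l))"
  proof (intro sum.cong refl)
    fix l assume l: "l \<in> R"
    have "(\<Sum>m\<in>R. cinner (w l) (w m)) = cinner (w l) (w l) + (\<Sum>m\<in>R-{l}. cinner (w l) (w m))"
      using R l by (simp add: sum.remove)
    also have "(\<Sum>m\<in>R-{l}. cinner (w l) (w m)) = 0"
      using o l by (intro sum.neutral) auto
    finally show "(\<Sum>m\<in>R. cinner (w l) (w m)) = cinner (w l) (w l)" by simp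
  qed
  also have "\<dots> = complex_of_real (\<Sum>l\<in>R. (norm (w l))^2)"
    by (simp add: cinner_self)
  finally show ?thesis by (simp only: of_real_eq_iff)
qed

context cs_setting begin

lemma herm_adj:
  assumes h: "st h = h"
  shows "adj (th h) = th h"
proof -
  have "adj (th h) *v y = th h *v y" for y
  proof (rule vec_eq_cinner)
    fix x
    have "cinner (adj (th h) *v y) x = cnj (cinner x (adj (th h) *v y))" by (simp add: cinner_cnj)
    also have "cinner x (adj (th h) *v y) = cinner (th h *v x) y" by (simp add: cinner_adj)
    also have "\<dots> = cinner x (th h *v y)" by (rule sa_herm[OF h])
    finally show "cinner (adj (th h) *v y) x = cinner (th h *v y) x" by (simp add: cinner_cnj)
  qed
  then show ?thesis by (simp add: matrix_eq)
qed

lemma st_hom: "th (st f) = adj (th f)"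
proof -
  obtain f1 f2 where g: "st f1 = f1" "st f2 = f2" "f = f1 + sm \<i> f2"
    using re_im_split by blast
  have sf: "st f = f1 + sm (- \<i>) f2" by (simp add: g st_add st_sm)
  have "th (st f) *v v = adj (th f) *v v" for v
  proof -
    have "th (st f) *v v = th f1 *v v + (- \<i>) *s (th f2 *v v)"
      unfolding sf by (simp only: th_mv_add th_mv_sm)
    moreover have "adj (th f) *v v = th f1 *v v + (- \<i>) *s (th f2 *v v)"
      unfolding g(3) by (simp add: th_add th_sm adj_add adj_mscale herm_adj[OF g(1)] herm_adj[OF g(2)]
        matrix_vector_mult_add_rdistrib mscale_mv)
    ultimately show ?thesis by simp
  qed
  then show ?thesis by (simp add: matrix_eq)
qed

lemma sa_contr:
  assumes k: "st k = k"
  shows "norm (th k *v v) \<le> norm k * norm v"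
proof -
  obtain R e where d: "finite R" "\<forall>v. (\<Sum>l\<in>R. th (e l) *v v) = v"
    "\<forall>l\<in>R. \<forall>v. th k *v (th (e l) *v v) = l *s (th (e l) *v v)"
    using sa_decomp[OF k] by blast
  have o: "cinner (th (e l) *v v) (th (e m) *v v) = 0" if "l \<in> R" "m \<in> R" "l \<noteq> m" for l m
    using decomp_orth[OF k] d(3) that by blast
  have hv: "th k *v v = (\<Sum>l\<in>R. l *s (th (e l) *v v))"
  proof -
    have "th k *v v = th k *v (\<Sum>l\<in>R. th (e l) *v v)" using d(2) by simp
    also have "\<dots> = (\<Sum>l\<in>R. th k *v (th (e l) *v v))" by (rule mv_sum)
    also have "\<dots> = (\<Sum>l\<in>R. l *s (th (e l) *v v))" using d(3) by (intro sum.cong) auto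
    finally show ?thesis .
  qed
  have "(norm (th k *v v))^2 = (\<Sum>l\<in>R. (norm (l *s (th (e l) *v v)))^2)"
    unfolding hv by (rule pythag[OF d(1)]) (simp add: cinner_scale_left cinner_scale_right o)
  also have "\<dots> \<le> (\<Sum>l\<in>R. (norm k)^2 * (norm (th (e l) *v v))^2)"
  proof (intro sum_mono)
    fix l assume l: "l \<in> R"
    show "(norm (l *s (th (e l) *v v)))^2 \<le> (norm k)^2 * (norm (th (e l) *v v))^2"
    proof (cases "th (e l) *v v = 0")
      case False
      have "cmod l \<le> norm k" using eig_bound[OF _ False] d(3) l by blast
      then have "(cmod l)^2 \<le> (norm k)^2" by (simp add: power_mono)
      then show ?thesis by (simp add: norm_smult_vec power_mult_distrib mult_right_mono)
    qed simp
  qed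
  also have "\<dots> = (norm k)^2 * (norm v)^2"
  proof -
    have "(norm v)^2 = (\<Sum>l\<in>R. (norm (th (e l) *v v))^2)"
      using pythag[OF d(1), of "\<lambda>l. th (e l) *v v"] o d(2) by simp
    then show ?thesis by (simp add: sum_distrib_left)
  qed
  finally have "(norm (th k *v v))^2 \<le> (norm k * norm v)^2" by (simp add: power_mult_distrib)
  then show ?thesis by (rule power2_le_imp_le) simp
qed

lemma th_contr: "norm (th f *v v) \<le> norm f * norm v"
proof -
  have "complex_of_real ((norm (th f *v v))^2) = cinner (th f *v v) (th f *v v)"
    by (simp add: cinner_self)
  also have "\<dots> = cinner v (adj (th f) *v (th f *v v))" by (rule cinner_adj)
  also have "\<dots> = cinner v (th (st f * f) *v v)" by (simp add: th_mv_mult st_hom)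
  finally have eq: "complex_of_real ((norm (th f *v v))^2) = cinner v (th (st f * f) *v v)" .
  have sk: "st (st f * f) = st f * f" by (simp add: st_mult mult.commute)
  have "(norm (th f *v v))^2 = Re (cinner v (th (st f * f) *v v))"
    using arg_cong[OF eq, of Re] by simp
  also have "\<dots> \<le> cmod (cinner v (th (st f * f) *v v))" by (rule complex_Re_le_cmod)
  also have "\<dots> \<le> norm v * norm (th (st f * f) *v v)" by (rule cinner_CS)
  also have "\<dots> \<le> norm v * (norm (st f * f) * norm v)"
    by (intro mult_left_mono sa_contr[OF sk]) simp
  also have "\<dots> = (norm f * norm v)^2" by (simp add: cstar power2_eq_square)
  finally show ?thesis by (rule power2_le_imp_le) simp
qed

lemma final_sup: "Sup {mnorm (th f) | f. norm f \<le> 1} = 1"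
proof (rule cSup_eq_maximum)
  have "mnorm (th 1) = 1"
    by (simp add: mnorm_def th_one onorm_id)
  then show "1 \<in> {mnorm (th f) | f. norm f \<le> 1}" by (metis (mono_tags, lifting) mem_Collect_eq norm_one order_refl)
next
  fix x assume "x \<in> {mnorm (th f) | f. norm f \<le> 1}"
  then obtain f where f: "x = mnorm (th f)" "norm f \<le> 1" by blast
  have "mnorm (th f) \<le> norm f"
    unfolding mnorm_def by (rule onorm_le) (rule th_contr)
  then show "x \<le> 1" using f by simp
qed

end

theorem theorem1p5:
  fixes sm :: "complex \<Rightarrow> 'a::{real_normed_algebra_1,comm_ring_1,banach} \<Rightarrow> 'a"
    and st :: "'a \<Rightarrow> 'a"
    and \<theta> :: "'a \<Rightarrow> complex^'n::finite^'n"
    and \<alpha> :: "'a \<Rightarrow> 'a"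
  assumes A: "comm_unital_cstar sm st"
    and th_add: "\<And>x y. \<theta> (x + y) = \<theta> x + \<theta> y"
    and th_sm: "\<And>c x. \<theta> (sm c x) = mscale c (\<theta> x)"
    and th_mult: "\<And>x y. \<theta> (x * y) = \<theta> x ** \<theta> y"
    and th_one: "\<theta> 1 = mat 1"
    and th_cont: "continuous_on UNIV \<theta>"
    and al_add: "\<And>x y. \<alpha> (x + y) = \<alpha> x + \<alpha> y"
    and al_sm: "\<And>c x. \<alpha> (sm c x) = sm (cnj c) (\<alpha> x)"
    and al_contr: "\<And>f. norm (\<alpha> f) \<le> norm f"
    and al_one: "\<alpha> 1 = 1"
    and th_al_norm: "\<And>f. mnorm (mscale (1/2) (\<theta> f + adj (\<theta> (\<alpha> f)))) \<le> norm f"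
  shows "(\<forall>f. \<theta> (st f) = adj (\<theta> f)) \<and> Sup {mnorm (\<theta> f) | f. norm f \<le> 1} = 1"
proof -
  interpret L: cs_setting sm st \<theta> \<alpha>
    by (unfold_locales; fact assms)
  show ?thesis using L.st_hom L.final_sup by blast
qed


end
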